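(* Let $n \geq 1$ and $m \geq 1$ be integers, and let $p:\mathbb{C} \rightarrow \mathbb{C}$ be a polynomial of degree $n+m$ whose roots (listed with multiplicity) are $a_1, \dots, a_{n+m}$, where $|a_i| \leq 1$ for $1 \leq i \leq n$ (these $n$ roots lie inside the unit disk) and the remaining $m$ roots $a_{n+1}, \dots, a_{n+m}$ lie outside the unit disk. Suppose there is a real number $d$ with $$ \min_{n+1 \leq i \leq n+m}{ |a_i|} \geq d > 1 + \frac{2 m}{n}.$$ Then $p'$ has $n-1$ roots (counted with multiplicity) inside the unit disk and its remaining $m$ roots have modulus at least $\frac{dn - m}{n+m}$, a quantity which is $> 1$.
   Context: Roots of $p$ and of $p'$ are counted with multiplicity; "inside the unit disk" means in the closed disk $\{z : |z| \leq 1\}$. *)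

theory Defs
  imports Complex_Main "HOL-Computational_Algebra.Computational_Algebra"
begin

end

theory Submission imports Defs "HOL-Complex_Analysis.Complex_Analysis" begin

lemma msum_Re_ge:
  fixes f :: "complex \<Rightarrow> complex"
  assumes "\<And>a. a \<in># A \<Longrightarrow> c \<le> Re (f a)"
  shows "real (size A) * c \<le> Re (\<Sum>a\<in>#A. f a)"
  using assms by (induction A) (auto simp: algebra_simps add_mono)

lemma msum_norm_le:
  fixes f :: "complex \<Rightarrow> complex"
  assumes "\<And>a. a \<in># A \<Longrightarrow> cmod (f a) \<le> c"
  shows "cmod (\<Sum>a\<in>#A. f a) \<le> real (size A) * c"
  using assms
proof (induction A)
  case empty then show ?case by simp
next
  case (add x A)
  have "cmod (\<Sum>a\<in># add_mset x A. f a) \<le> cmod (f x) + cmod (\<Sum>a\<in>#A. f a)"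
    by (simp add: norm_triangle_ineq)
  also have "\<dots> \<le> c + real (size A) * c" using add by (intro add_mono) auto
  finally show ?case by (simp add: algebra_simps)
qed

lemma in_term:
  fixes z a :: complex
  assumes "cmod a \<le> 1" "1 < cmod z"
  shows "cmod z / (cmod z + 1) \<le> Re (z / (z - a))"
proof -
  define r where "r = cmod z"
  define s where "s = cmod a"
  define y where "y = Re (z * cnj a)"
  have s0: "0 \<le> s" by (simp add: s_def)
  have y1: "- (r * s) \<le> y"
  proof -
    have "\<bar>y\<bar> \<le> cmod (z * cnj a)" unfolding y_def by (rule abs_Re_le_cmod)
    also have "\<dots> = r * s" by (simp add: r_def s_def norm_mult)
    finally show ?thesis by linarith
  qed
  have zne: "z \<noteq> a" using assms by auto
  have D: "(cmod (z - a))^2 = r^2 - 2*y + s^2"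
    unfolding r_def s_def y_def cmod_power2 by (simp add: power2_eq_square algebra_simps)
  have N: "Re (z * cnj (z - a)) = r^2 - y"
    unfolding r_def y_def cmod_power2 by (simp add: power2_eq_square algebra_simps)
  have Dpos: "0 < (cmod (z - a))^2" using zne by simp
  have eq: "Re (z / (z - a)) = (r^2 - y) / (cmod (z - a))^2"
    using N by (simp add: Re_divide' algebra_simps)
  have key: "r * (r^2 - 2*y + s^2) \<le> (r^2 - y) * (r + 1)"
  proof -
    have "y * (r - 1) \<ge> - (r * s) * (r - 1)"
      using y1 assms by (intro mult_right_mono) (auto simp: r_def)
    moreover have "0 \<le> r * (1 - s) * (r + s)"
      using assms s0 by (intro mult_nonneg_nonneg) (auto simp: r_def s_def)
    ultimately show ?thesis by (simp add: algebra_simps power2_eq_square) 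
  qed
  have "r / (r + 1) \<le> (r^2 - y) / (cmod (z - a))^2"
    using key Dpos assms unfolding D by (simp add: divide_simps r_def) 
  then show ?thesis using eq by (simp add: r_def)
qed

lemma out_term:
  fixes z a :: complex
  assumes "cmod z < d" "d \<le> cmod a"
  shows "cmod (z / (z - a)) \<le> cmod z / (d - cmod z)"
proof -
  have "d - cmod z \<le> cmod (z - a)" using norm_triangle_ineq2[of a z] assms
    by (simp add: norm_minus_commute)
  then show ?thesis using assms
    by (simp add: norm_divide frac_le)
qed

lemma in_norm:
  fixes z a :: complex
  assumes "cmod a \<le> 1" "1 < cmod z"
  shows "cmod (z / (z - a)) \<le> cmod z / (cmod z - 1)"
proof -
  have "cmod z - 1 \<le> cmod (z - a)" using norm_triangle_ineq2[of z a] assms by simp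
  then show ?thesis using assms
    by (simp add: norm_divide frac_le)
qed

lemma logderiv_prod:
  fixes z :: complex
  assumes "z \<notin># A"
  shows "poly (pderiv (\<Prod>a\<in>#A. [:-a,1:])) z * z
         = poly (\<Prod>a\<in>#A. [:-a,1:]) z * (\<Sum>a\<in>#A. z / (z - a))"
  using assms
proof (induction A)
  case empty then show ?case by simp
next
  case (add x A)
  then have zx: "z - x \<noteq> 0" by auto
  have IH: "poly (pderiv (\<Prod>a\<in>#A. [:-a,1:])) z * z
         = poly (\<Prod>a\<in>#A. [:-a,1:]) z * (\<Sum>a\<in>#A. z / (z - a))" using add by auto
  have "poly (pderiv (\<Prod>a\<in>#add_mset x A. [:-a,1:])) z * z
      = poly (\<Prod>a\<in>#A. [:-a,1:]) z * z + (z - x) * (poly (pderiv (\<Prod>a\<in>#A. [:-a,1:])) z * z)"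
  proof -
    have "(\<Prod>a\<in>#add_mset x A. [:-a,1:]) = [:-x,1:] * (\<Prod>a\<in>#A. [:-a,1:])" by simp
    then show ?thesis by (simp only: pderiv_mult) (simp add: pderiv_pCons algebra_simps)
  qed
  also have "\<dots> = (z - x) * poly (\<Prod>a\<in>#A. [:-a,1:]) z * (z / (z - x) + (\<Sum>a\<in>#A. z / (z - a)))"
    unfolding IH using zx by (simp add: field_simps)
  finally show ?case by (simp add: algebra_simps)
qed

lemma poly_holo: "poly (q::complex poly) holomorphic_on S"
  by (meson field_differentiable_at_within field_differentiable_def holomorphic_on_def poly_DERIV)

lemma zorder_poly:
  fixes p :: "complex poly"
  assumes "p \<noteq> 0"
  shows "zorder (poly p) z = int (order z p)"
proof -
  obtain q where q: "p = [:- z, 1:] ^ order z p * q" "\<not> [:- z, 1:] dvd q"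
    using order_decomp[OF assms] by blast
  have "poly q z \<noteq> 0" using q(2) by (simp add: poly_eq_0_iff_dvd)
  show ?thesis
  proof (rule zorder_eqI[where S=UNIV and g="poly q"])
    fix w assume "w \<in> (UNIV::complex set)" "w \<noteq> z"
    show "poly p w = poly q w * (w - z) powi int (order z p)"
      by (subst q(1)) (simp add: power_int_of_nat algebra_simps)
  qed (use \<open>poly q z \<noteq> 0\<close> in \<open>auto simp: poly_holo\<close>)
qed

lemma size_filter_proots:
  fixes p :: "complex poly"
  assumes "p \<noteq> 0"
  shows "size (filter_mset P (proots p)) = (\<Sum>z\<in>{z. poly p z = 0 \<and> P z}. order z p)"
proof -
  have "size (filter_mset P (proots p)) = (\<Sum>z\<in>set_mset (filter_mset P (proots p)). count (filter_mset P (proots p)) z)"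
    by (rule size_multiset_overloaded_eq)
  also have "set_mset (filter_mset P (proots p)) = {z. poly p z = 0 \<and> P z}"
    using assms by auto
  also have "(\<Sum>z\<in>{z. poly p z = 0 \<and> P z}. count (filter_mset P (proots p)) z) = (\<Sum>z\<in>{z. poly p z = 0 \<and> P z}. order z p)"
    using assms by (intro sum.cong) auto
  finally show ?thesis .
qed


lemma RC:
  fixes r :: "complex poly" and \<rho> :: real
  assumes "r \<noteq> 0" "0 < \<rho>" "\<And>z. cmod z = \<rho> \<Longrightarrow> poly r z \<noteq> 0"
  shows "(\<Sum>z\<in>{z. poly r z = 0}. winding_number (circlepath 0 \<rho>) z * of_int (zorder (poly r) z))
         = of_nat (size (filter_mset (\<lambda>z. cmod z < \<rho>) (proots r)))"
proof -
  have fin: "finite {z. poly r z = 0}" using assms(1) by (rule poly_roots_finite)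
  have "(\<Sum>z\<in>{z. poly r z = 0}. winding_number (circlepath 0 \<rho>) z * of_int (zorder (poly r) z))
      = (\<Sum>z\<in>{z. poly r z = 0}. if cmod z < \<rho> then of_nat (order z r) else 0)"
  proof (rule sum.cong)
    fix z assume z: "z \<in> {z. poly r z = 0}"
    show "winding_number (circlepath 0 \<rho>) z * of_int (zorder (poly r) z)
          = (if cmod z < \<rho> then of_nat (order z r) else 0)"
    proof (cases "cmod z < \<rho>")
      case True
      then have "winding_number (circlepath 0 \<rho>) z = 1"
        by (intro winding_number_circlepath) auto
      then show ?thesis using True by (simp add: zorder_poly[OF assms(1)])
    next
      case False
      then have "cmod z \<noteq> \<rho>" using assms(3) z by auto
      with False have "z \<notin> cball 0 \<rho>" by auto
      then have "winding_number (circlepath 0 \<rho>) z = 0"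
        using assms(2) by (intro winding_number_zero_outside[where s="cball 0 \<rho>"]) auto
      then show ?thesis using False by simp
    qed
  qed simp
  also have "\<dots> = (\<Sum>z\<in>{z\<in>{z. poly r z = 0}. cmod z < \<rho>}. of_nat (order z r))"
    by (rule sum.inter_filter[OF fin, symmetric])
  also have "{z\<in>{z. poly r z = 0}. cmod z < \<rho>} = {z. poly r z = 0 \<and> cmod z < \<rho>}" by auto
  also have "(\<Sum>z\<in>{z. poly r z = 0 \<and> cmod z < \<rho>}. (of_nat (order z r) :: complex))
      = of_nat (size (filter_mset (\<lambda>z. cmod z < \<rho>) (proots r)))"
    by (simp add: size_filter_proots[OF assms(1)])
  finally show ?thesis .
qed


theorem theorem1:
  fixes p :: "complex poly" and n m :: nat and d :: real
  assumes "n \<ge> 1" and "m \<ge> 1"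
    and "degree p = n + m"
    and "size (filter_mset (\<lambda>z. cmod z \<le> 1) (proots p)) = n"
    and "\<forall>z \<in># proots p. cmod z > 1 \<longrightarrow> d \<le> cmod z"
    and "d > 1 + 2 * real m / real n"
  shows "size (filter_mset (\<lambda>z. cmod z \<le> 1) (proots (pderiv p))) = n - 1
    \<and> size (filter_mset (\<lambda>z. cmod z > 1) (proots (pderiv p))) = m
    \<and> (\<forall>z \<in># proots (pderiv p). cmod z > 1 \<longrightarrow>
          (d * real n - real m) / real (n + m) \<le> cmod z)
    \<and> (d * real n - real m) / real (n + m) > 1"
proof -
  define A where "A = proots p"
  define Ain where "Ain = filter_mset (\<lambda>z. cmod z \<le> 1) A"
  define Aout where "Aout = filter_mset (\<lambda>z. \<not> cmod z \<le> 1) A"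
  define q where "q = pderiv p"
  define R where "R = (d * real n - real m) / real (n + m)"
  have n0: "real n > 0" using assms(1) by simp
  have m0: "real m > 0" using assms(2) by simp
  have p0: "p \<noteq> 0" using assms(3) assms(1) by auto
  have sizeA: "size A = n + m" unfolding A_def by (simp add: size_proots_complex assms(3))
  have AA: "A = Ain + Aout" unfolding Ain_def Aout_def by (rule multiset_partition)
  have sin: "size Ain = n" using assms(4) unfolding Ain_def A_def .
  have sout: "size Aout = m" using sizeA sin AA by (metis add_left_cancel size_union)
  have inA: "\<And>a. a \<in># Ain \<Longrightarrow> cmod a \<le> 1" unfolding Ain_def by auto
  have outA: "\<And>a. a \<in># Aout \<Longrightarrow> d \<le> cmod a" using assms(5) unfolding Aout_def A_def by auto
  have "2 * real m / real n \<ge> 0" by simp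
  then have d1: "d > 1" using assms(6) by linarith
  have R1: "R > 1"
  proof -
    have "(1 + 2 * real m / real n) * real n < d * real n"
      using mult_strict_right_mono[OF assms(6) n0] .
    moreover have "(1 + 2 * real m / real n) * real n = real n + 2 * real m" using n0 by (simp add: field_simps)
    ultimately have "d * real n > real n + 2 * real m" by simp
    then show ?thesis unfolding R_def using n0 m0 by (simp add: field_simps)
  qed
  have dm: "0 < d * real m" using d1 m0 by simp
  have "d * real n - real m < d * real (n + m)" using dm m0 by (simp add: algebra_simps)
  then have Rd: "R < d" unfolding R_def using n0 by (simp add: divide_less_eq)
  define c where "c = lead_coeff p"
  define P0 where "P0 = (\<Prod>a\<in>#A. [:-a,1:])"
  have c0: "c \<noteq> 0" using p0 unfolding c_def by simp
  have pP0: "p = smult c P0" unfolding c_def P0_def A_def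
    by (rule complex_poly_decompose_multiset[symmetric])
  have qP0: "q = smult c (pderiv P0)" unfolding q_def by (subst pP0) (simp add: pderiv_smult)
  have W: "poly p z \<noteq> 0 \<and> poly q z * z = poly p z * (\<Sum>a\<in>#A. z / (z - a))
      \<and> real n * (cmod z / (cmod z + 1)) - real m * (cmod z / (d - cmod z)) \<le> Re (\<Sum>a\<in>#A. z / (z - a))
      \<and> cmod (\<Sum>a\<in>#A. z / (z - a)) \<le> real n * (cmod z / (cmod z - 1)) + real m * (cmod z / (d - cmod z))"
    if z: "1 < cmod z" "cmod z < d" for z
  proof -
    have zA: "z \<notin># A"
    proof
      assume "z \<in># A"
      then have "z \<in># Ain \<or> z \<in># Aout" using AA by (metis union_iff)
      then show False using inA outA z by force
    qed
    then have pz: "poly p z \<noteq> 0" using p0 unfolding A_def by simp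
    have eq: "poly q z * z = poly p z * (\<Sum>a\<in>#A. z / (z - a))"
      using logderiv_prod[OF zA] unfolding qP0 pP0 P0_def by simp
    have split: "(\<Sum>a\<in>#A. z / (z - a)) = (\<Sum>a\<in>#Ain. z / (z - a)) + (\<Sum>a\<in>#Aout. z / (z - a))"
      by (subst AA) simp
    have re1: "real (size Ain) * (cmod z / (cmod z + 1)) \<le> Re (\<Sum>a\<in>#Ain. z / (z - a))"
      by (rule msum_Re_ge) (use inA in_term z in auto)
    have re2: "real (size Aout) * (- (cmod z / (d - cmod z))) \<le> Re (\<Sum>a\<in>#Aout. z / (z - a))"
    proof (rule msum_Re_ge)
      fix a assume "a \<in># Aout"
      then have "cmod (z / (z - a)) \<le> cmod z / (d - cmod z)" using outA z out_term by blast
      moreover have "- cmod (z / (z - a)) \<le> Re (z / (z - a))" using abs_Re_le_cmod[of "z / (z - a)"] by linarith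
      ultimately show "- (cmod z / (d - cmod z)) \<le> Re (z / (z - a))" by linarith
    qed
    have no1: "cmod (\<Sum>a\<in>#Ain. z / (z - a)) \<le> real (size Ain) * (cmod z / (cmod z - 1))"
      by (rule msum_norm_le) (use inA in_norm z in auto)
    have no2: "cmod (\<Sum>a\<in>#Aout. z / (z - a)) \<le> real (size Aout) * (cmod z / (d - cmod z))"
      by (rule msum_norm_le) (use outA out_term z in auto)
    have "cmod (\<Sum>a\<in>#A. z / (z - a)) \<le> cmod (\<Sum>a\<in>#Ain. z / (z - a)) + cmod (\<Sum>a\<in>#Aout. z / (z - a))"
      unfolding split by (rule norm_triangle_ineq)
    then show ?thesis using pz eq re1 re2 no1 no2 sin sout split by auto
  qed
  have pos: "real n * (r / (r + 1)) - real m * (r / (d - r)) > 0" if r: "1 < r" "r < R" for r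
  proof -
    have "r * real (n + m) < d * real n - real m" using r n0 m0 unfolding R_def by (simp add: field_simps)
    then have "real m * (r + 1) < real n * (d - r)" by (simp add: algebra_simps)
    moreover have "d - r > 0" using r Rd by simp
    ultimately have "real m / (d - r) < real n / (r + 1)" using r by (simp add: field_simps)
    then have "real m / (d - r) * r < real n / (r + 1) * r" using r by (intro mult_strict_right_mono) auto
    then show ?thesis by simp
  qed
  have degq: "degree q = n + m - 1" unfolding q_def degree_pderiv assms(3) ..
  have q0: "q \<noteq> 0" using degq assms(1,2) by auto
  have claimA: "R \<le> cmod z" if "poly q z = 0" "1 < cmod z" for z
  proof (rule ccontr)
    assume "\<not> R \<le> cmod z"
    then have zR: "cmod z < R" by simp
    then have "cmod z < d" using Rd by simp
    from W[OF \<open>1 < cmod z\<close> this] have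
      "poly p z \<noteq> 0" "poly q z * z = poly p z * (\<Sum>a\<in>#A. z / (z - a))"
      "real n * (cmod z / (cmod z + 1)) - real m * (cmod z / (d - cmod z)) \<le> Re (\<Sum>a\<in>#A. z / (z - a))"
      by auto
    moreover have "(\<Sum>a\<in>#A. z / (z - a)) = 0" using calculation(1,2) that(1) by simp
    ultimately show False using pos[OF \<open>1 < cmod z\<close> zR] by simp
  qed
  define \<rho> where "\<rho> = (1 + R) / 2"
  have rho: "1 < \<rho>" "\<rho> < R" "\<rho> < d" using R1 Rd unfolding \<rho>_def by auto
  define \<delta> where "\<delta> = real n * (\<rho> / (\<rho> + 1)) - real m * (\<rho> / (d - \<rho>))"
  define M where "M = real n * (\<rho> / (\<rho> - 1)) + real m * (\<rho> / (d - \<rho>))"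
  have \<delta>0: "\<delta> > 0" unfolding \<delta>_def using pos rho by auto
  have M0: "M > 0" unfolding M_def using rho n0 m0 by (intro add_pos_nonneg) auto
  define t where "t = M^2 / \<delta>"
  have t0: "t > 0" unfolding t_def using M0 \<delta>0 by simp
  define Q where "Q = [:0,1:] * q"
  have Q0: "Q \<noteq> 0" unfolding Q_def using q0 by simp
  have polyQ: "poly Q z = z * poly q z" for z unfolding Q_def by simp
  have sphere: "poly p z \<noteq> 0 \<and> cmod (poly Q z - poly (smult (of_real t) p) z) < cmod (poly (smult (of_real t) p) z)"
    if z: "cmod z = \<rho>" for z
  proof -
    define w where "w = (\<Sum>a\<in>#A. z / (z - a))"
    from W[of z] z rho have Wz: "poly p z \<noteq> 0" "poly q z * z = poly p z * w"
      "\<delta> \<le> Re w" "cmod w \<le> M" unfolding w_def \<delta>_def M_def by auto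
    have "(cmod (w - of_real t))^2 = (cmod w)^2 - 2 * t * Re w + t^2"
      by (simp only: cmod_power2) (simp add: power2_eq_square algebra_simps)
    also have "\<dots> < t^2"
    proof -
      have "(cmod w)^2 \<le> M^2" using Wz(4) by (simp add: power_mono)
      also have "M^2 < 2 * M^2" using M0 by simp
      also have "2 * M^2 = 2 * t * \<delta>" unfolding t_def using \<delta>0 by simp
      also have "\<dots> \<le> 2 * t * Re w" using Wz(3) t0 by simp
      finally show ?thesis by simp
    qed
    finally have sq: "(cmod (w - of_real t))^2 < t^2" .
    have lt: "cmod (w - of_real t) < t"
      by (rule power_less_imp_less_base[OF sq]) (use t0 in simp)
    have Qz: "poly Q z = poly p z * w" using polyQ[of z] Wz(2) by (simp add: mult.commute)
    have e: "poly Q z - poly (smult (of_real t) p) z = poly p z * (w - of_real t)"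
      unfolding Qz by (simp add: right_diff_distrib mult.commute)
    have n1: "cmod (poly (smult (of_real t) p) z) = cmod (poly p z) * t" using t0 by (simp add: norm_mult)
    have pp: "cmod (poly p z) > 0" using Wz(1) by simp
    have "cmod (poly p z * (w - of_real t)) < cmod (poly p z) * t"
      unfolding norm_mult by (rule mult_strict_left_mono[OF lt pp])
    then show ?thesis using Wz(1) e n1 by simp
  qed
  have rouche: "(\<Sum>z\<in>{z\<in>UNIV. poly (smult (of_real t) p) z + (poly Q z - poly (smult (of_real t) p) z) = 0}.
        winding_number (circlepath 0 \<rho>) z * zorder (\<lambda>z. poly (smult (of_real t) p) z + (poly Q z - poly (smult (of_real t) p) z)) z)
      = (\<Sum>z\<in>{z\<in>UNIV. poly (smult (of_real t) p) z = 0}.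
        winding_number (circlepath 0 \<rho>) z * zorder (poly (smult (of_real t) p)) z)"
  proof (rule Rouche_theorem)
    show "finite {z \<in> UNIV. poly (smult (complex_of_real t) p) z + (poly Q z - poly (smult (complex_of_real t) p) z) = 0}"
      using poly_roots_finite[OF Q0] by simp
    show "finite {z \<in> UNIV. poly (smult (complex_of_real t) p) z = 0}"
      using poly_roots_finite[of "smult (of_real t) p"] p0 t0 by simp
    show "\<forall>z\<in>path_image (circlepath 0 \<rho>). cmod (poly (smult (complex_of_real t) p) z) > cmod (poly Q z - poly (smult (complex_of_real t) p) z)"
      using sphere rho by auto
  qed (auto simp: poly_holo holomorphic_intros)
  have e1: "(\<lambda>z. poly (smult (of_real t) p) z + (poly Q z - poly (smult (of_real t) p) z)) = poly Q" by auto
  have sQ: "of_nat (size (filter_mset (\<lambda>z. cmod z < \<rho>) (proots Q))) =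
      (of_nat (size (filter_mset (\<lambda>z. cmod z < \<rho>) (proots (smult (of_real t) p)))) :: complex)"
  proof -
    have "of_nat (size (filter_mset (\<lambda>z. cmod z < \<rho>) (proots Q))) =
      (\<Sum>z\<in>{z. poly Q z = 0}. winding_number (circlepath 0 \<rho>) z * of_int (zorder (poly Q) z))"
    proof (rule RC[symmetric, OF Q0])
      show "0 < \<rho>" using rho by simp
      fix z assume "cmod z = \<rho>" then show "poly Q z \<noteq> 0" using sphere[of z] by auto
    qed
    also have "\<dots> = (\<Sum>z\<in>{z. poly (smult (of_real t) p) z = 0}. winding_number (circlepath 0 \<rho>) z * of_int (zorder (poly (smult (of_real t) p)) z))"
      using rouche unfolding e1 by simp
    also have "\<dots> = of_nat (size (filter_mset (\<lambda>z. cmod z < \<rho>) (proots (smult (of_real t) p))))"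
    proof (rule RC)
      show "smult (of_real t) p \<noteq> 0" using p0 t0 by simp
      show "0 < \<rho>" using rho by simp
      fix z assume "cmod z = \<rho>" then show "poly (smult (of_real t) p) z \<noteq> 0" using sphere[of z] t0 by auto
    qed
    finally show ?thesis .
  qed
  have sQ': "size (filter_mset (\<lambda>z. cmod z < \<rho>) (proots Q)) = size (filter_mset (\<lambda>z. cmod z < \<rho>) (proots p))"
    using sQ t0 by (simp only: of_nat_eq_iff) simp
  have fp: "filter_mset (\<lambda>z. cmod z < \<rho>) (proots p) = filter_mset (\<lambda>z. cmod z \<le> 1) (proots p)"
  proof (rule filter_mset_cong[OF refl])
    fix z assume "z \<in># proots p"
    then show "cmod z < \<rho> \<longleftrightarrow> cmod z \<le> 1" using assms(5) rho by force
  qed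
  have fq: "filter_mset (\<lambda>z. cmod z < \<rho>) (proots q) = filter_mset (\<lambda>z. cmod z \<le> 1) (proots q)"
  proof (rule filter_mset_cong[OF refl])
    fix z assume "z \<in># proots q"
    then have "poly q z = 0" using q0 by simp
    then show "cmod z < \<rho> \<longleftrightarrow> cmod z \<le> 1" using claimA[of z] rho by force
  qed
  have pQ1: "proots Q = proots [:0,1:] + proots q" unfolding Q_def
    by (rule proots_mult) (use q0 in auto)
  have pQ2: "proots [:0::complex,1:] = {#0#}" using proots_linear_factor[of "0::complex"] by simp
  have pQ: "proots Q = add_mset 0 (proots q)" using pQ1 pQ2 by simp
  have first: "size (filter_mset (\<lambda>z. cmod z \<le> 1) (proots q)) = n - 1"
  proof -
    have "size (filter_mset (\<lambda>z. cmod z < \<rho>) (proots Q)) = Suc (size (filter_mset (\<lambda>z. cmod z < \<rho>) (proots q)))"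
      unfolding pQ using rho by simp
    then have "Suc (size (filter_mset (\<lambda>z. cmod z \<le> 1) (proots q))) = n"
      using sQ' unfolding fp fq assms(4) by simp
    then show ?thesis by simp
  qed
  have second: "size (filter_mset (\<lambda>z. cmod z > 1) (proots q)) = m"
  proof -
    have "size (proots q) = n + m - 1" using degq by (simp add: size_proots_complex)
    moreover have "proots q = filter_mset (\<lambda>z. cmod z \<le> 1) (proots q) + filter_mset (\<lambda>z. \<not> cmod z \<le> 1) (proots q)"
      by (rule multiset_partition)
    moreover have "filter_mset (\<lambda>z. \<not> cmod z \<le> 1) (proots q) = filter_mset (\<lambda>z. cmod z > 1) (proots q)"
      by (rule filter_mset_cong) auto
    ultimately have "size (proots q) = size (filter_mset (\<lambda>z. cmod z \<le> 1) (proots q)) + size (filter_mset (\<lambda>z. cmod z > 1) (proots q))"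
      by (metis size_union)
    then show ?thesis using first assms(1) degq \<open>size (proots q) = n + m - 1\<close> by linarith
  qed
  have third: "\<forall>z \<in># proots q. cmod z > 1 \<longrightarrow> R \<le> cmod z"
    using claimA q0 by auto
  show ?thesis using first second third R1 unfolding q_def R_def by blast
qed

end
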